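(* Let $f\in\mathcal N(J)^\perp$ and let $(f_n)$ be generated by the scheme (S) (no spectral-case assumption). Then $(f_n)$ is bounded by $\|f\|$ and admits a subsequence $(f_{n_k})$ converging weakly in $\mathcal H$ to some $g\in\mathcal H$.
   Context: Let $\mathcal H$ be a real Hilbert space and $J:\mathcal H\to\mathbb R\cup\{+\infty\}$ a proper, convex, lower semicontinuous, absolutely one-homogeneous functional ($J(\alpha u)=|\alpha|J(u)$). Let $\mathcal N(J)=\{u: J(u)=0\}$ be its null-space, and assume the Poincaré-type inequality: there is $C>0$ with $\|u\|\le C J(u)$ for all $u\in\mathcal N(J)^\perp$. $\partial J$ denotes the convex subdifferential. Gradient flow: for $g\in\mathcal H$, the gradient flow of $J$ with datum $g$ is the solution $u$ of $u'(t)=-p(t)$, $p(t)\in\partial J(u(t))$, $u(0)=g$, where $p(t)$ is the element of minimal norm in $\partial J(u(t))$. For $g\in\mathcal N(J)^\perp\setminus\{0\}$ the flow extinguishes at a finite time $T>0$. An extinction profile of $g$ is any element $p^*=\lim_{k\to\infty}\frac{1}{T-t_k}\int_{t_k}^T p(s)\,ds$ for some increasing sequence $t_k\to T$ along which the limit exists; it is known that such $p^*$ exists, $p^*\neq 0$ and $p^*\in\partial J(p^* )$. Scheme (S): given $f\in\mathcal N(J)^\perp$, set $f_0=f$ and for $n\ge0$ let $p_n^*$ be an extinction profile of $f_n$, $c_n=\langle f_n,p_n^*\rangle/\|p_n^*\|^2$, and $f_{n+1}=f_n-c_np_n^*$. (If some $f_n=0$, the scheme is stopped and we set $f_m=0$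 for $m\ge n$.) *)

theory Defs
  imports "HOL-Analysis.Analysis"
begin

text \<open>Functionals take values in the extended reals (only finite values or +\<infinity> are allowed).\<close>

definition proper_fun :: "('a \<Rightarrow> ereal) \<Rightarrow> bool" where
  "proper_fun J \<longleftrightarrow> (\<forall>u. J u \<noteq> -\<infinity>) \<and> (\<exists>u. J u \<noteq> \<infinity>)"

definition convex_fun :: "('a::real_vector \<Rightarrow> ereal) \<Rightarrow> bool" where
  "convex_fun J \<longleftrightarrow> (\<forall>x y (l::real). 0 < l \<and> l < 1 \<longrightarrow>
      J (l *\<^sub>R x + (1 - l) *\<^sub>R y) \<le> ereal l * J x + ereal (1 - l) * J y)"

definition lsc_fun :: "('a::topological_space \<Rightarrow> ereal) \<Rightarrow> bool" where
  "lsc_fun J \<longleftrightarrow> (\<forall>c::real. closed {u. J u \<le> ereal c})"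

definition abs_one_homogeneous :: "('a::real_vector \<Rightarrow> ereal) \<Rightarrow> bool" where
  "abs_one_homogeneous J \<longleftrightarrow> (\<forall>(a::real) u. J (a *\<^sub>R u) = ereal \<bar>a\<bar> * J u)"

definition null_space :: "('a \<Rightarrow> ereal) \<Rightarrow> 'a set" where
  "null_space J = {u. J u = 0}"

definition orth_compl :: "'a::real_inner set \<Rightarrow> 'a set" where
  "orth_compl S = {u. \<forall>v\<in>S. inner u v = 0}"

definition poincare :: "('a::real_inner \<Rightarrow> ereal) \<Rightarrow> bool" where
  "poincare J \<longleftrightarrow> (\<exists>C>0. \<forall>u\<in>orth_compl (null_space J). ereal (norm u) \<le> ereal C * J u)"

definition subdiff :: "('a::real_inner \<Rightarrow> ereal) \<Rightarrow> 'a \<Rightarrow> 'a set" where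
  "subdiff J u = {p. J u \<noteq> \<infinity> \<and> (\<forall>v. J u + ereal (inner p (v - u)) \<le> J v)}"

definition min_norm_elem :: "'a::real_normed_vector set \<Rightarrow> 'a \<Rightarrow> bool" where
  "min_norm_elem S p \<longleftrightarrow> p \<in> S \<and> (\<forall>q\<in>S. norm p \<le> norm q)"

text \<open>Gradient flow (strong solution in the sense of Brezis): u continuous on [0,\<infinity>),
  u(0)=g, and for every t>0 the right derivative of u at t exists and equals -p(t),
  where p(t) is the element of minimal norm of \<partial>J(u(t)).\<close>
definition gradient_flow ::
  "('a::{real_inner,complete_space} \<Rightarrow> ereal) \<Rightarrow> 'a \<Rightarrow> (real \<Rightarrow> 'a) \<Rightarrow> (real \<Rightarrow> 'a) \<Rightarrow> bool" where
  "gradient_flow J g u p \<longleftrightarrow>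
     u 0 = g \<and> continuous_on {0..} u \<and>
     (\<forall>t>0. min_norm_elem (subdiff J (u t)) (p t) \<and>
            (u has_vector_derivative - p t) (at t within {t..}))"

definition extinction_time :: "(real \<Rightarrow> 'a::zero) \<Rightarrow> real \<Rightarrow> bool" where
  "extinction_time u T \<longleftrightarrow> T > 0 \<and> (\<forall>t\<ge>T. u t = 0) \<and> (\<forall>t. 0 \<le> t \<and> t < T \<longrightarrow> u t \<noteq> 0)"

definition extinction_profile ::
  "('a::{real_inner,complete_space} \<Rightarrow> ereal) \<Rightarrow> 'a \<Rightarrow> 'a \<Rightarrow> bool" where
  "extinction_profile J g ps \<longleftrightarrow>
     (\<exists>u p T t. gradient_flow J g u p \<and> extinction_time u T \<and>
        strict_mono t \<and> (\<forall>k. 0 \<le> t k \<and> t k < T) \<and> t \<longlonglongrightarrow> T \<and>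
        (\<forall>k. p integrable_on {t k..T}) \<and>
        (\<lambda>k. (1 / (T - t k)) *\<^sub>R integral {t k..T} p) \<longlonglongrightarrow> ps)"

definition scheme_S ::
  "('a::{real_inner,complete_space} \<Rightarrow> ereal) \<Rightarrow> 'a \<Rightarrow> (nat \<Rightarrow> 'a) \<Rightarrow> (nat \<Rightarrow> 'a) \<Rightarrow> bool" where
  "scheme_S J f0 f ps \<longleftrightarrow> f 0 = f0 \<and>
     (\<forall>n. f n \<noteq> 0 \<longrightarrow> extinction_profile J (f n) (ps n) \<and>
            f (Suc n) = f n - (inner (f n) (ps n) / (norm (ps n))\<^sup>2) *\<^sub>R ps n) \<and>
     (\<forall>n. f n = 0 \<longrightarrow> f (Suc n) = 0)"

definition weakly_converges :: "(nat \<Rightarrow> 'a::real_inner) \<Rightarrow> 'a \<Rightarrow> bool" where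
  "weakly_converges x g \<longleftrightarrow> (\<forall>v. (\<lambda>k. inner (x k) v) \<longlonglongrightarrow> inner g v)"

end

theory Submission
  imports Defs "HOL-Library.Diagonal_Subsequence"
begin

lemma norm_sq_diff_lemma:
  fixes a b :: "'a::real_inner"
  shows "(norm (a - b))\<^sup>2 = 2*(norm a)\<^sup>2 + 2*(norm b)\<^sup>2 - 4*(norm ((1/2) *\<^sub>R (a + b)))\<^sup>2"
  by (simp add: power2_norm_eq_inner inner_diff_left inner_diff_right inner_add_left inner_add_right inner_commute algebra_simps)

lemma projection_exists:
  fixes M :: "'a::{real_inner,complete_space} set"
  assumes sub: "subspace M" and cl: "closed M"
  shows "\<exists>m\<in>M. \<forall>v\<in>M. inner (z - m) v = 0"
proof -
  define D where "D = (\<lambda>m. (norm (z - m))\<^sup>2) ` M"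
  define d where "d = Inf D"
  have ne: "D \<noteq> {}" using sub unfolding D_def subspace_def by auto
  have bdd: "bdd_below D" unfolding D_def by (intro bdd_belowI[of _ 0]) auto
  have low: "d \<le> (norm (z - m))\<^sup>2" if "m \<in> M" for m
    unfolding d_def D_def using that bdd D_def by (auto intro: cInf_lower)
  have "\<exists>m\<in>M. (norm (z - m))\<^sup>2 < d + 1 / (real n + 1)" for n
  proof -
    have "Inf D < d + 1 / (real n + 1)" unfolding d_def by simp
    from cInf_lessD[OF ne this] show ?thesis unfolding D_def by auto
  qed
  then obtain s where s: "\<And>n. s n \<in> M" "\<And>n. (norm (z - s n))\<^sup>2 < d + 1 / (real n + 1)"
    by metis
  have mid: "(1/2) *\<^sub>R (s a + s b) \<in> M" for a b
    using sub s(1) unfolding subspace_def by auto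
  have key: "(norm (s a - s b))\<^sup>2 \<le> 2 / (real a + 1) + 2 / (real b + 1)" for a b
  proof -
    have "s a - s b = (z - s b) - (z - s a)" by simp
    hence "(norm (s a - s b))\<^sup>2 = 2*(norm (z - s b))\<^sup>2 + 2*(norm (z - s a))\<^sup>2
        - 4*(norm ((1/2) *\<^sub>R ((z - s b) + (z - s a))))\<^sup>2"
      using norm_sq_diff_lemma by metis
    also have "(1/2) *\<^sub>R ((z - s b) + (z - s a)) = z - (1/2) *\<^sub>R (s a + s b)"
      by (simp add: algebra_simps flip: scaleR_add_left)
    finally have e: "(norm (s a - s b))\<^sup>2 = 2*(norm (z - s b))\<^sup>2 + 2*(norm (z - s a))\<^sup>2
        - 4*(norm (z - (1/2) *\<^sub>R (s a + s b)))\<^sup>2" .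
    have "d \<le> (norm (z - (1/2) *\<^sub>R (s a + s b)))\<^sup>2" using low mid by blast
    thus ?thesis using e s(2)[of a] s(2)[of b] by linarith
  qed
  have "Cauchy s"
  proof (rule CauchyI)
    fix e :: real assume e: "e > 0"
    obtain N :: nat where N: "4 / e\<^sup>2 < real N" using reals_Archimedean2 by blast
    have "N > 0" using N e by (cases N) (auto intro: order.strict_trans2[of _ 0])
    show "\<exists>N. \<forall>a\<ge>N. \<forall>b\<ge>N. norm (s a - s b) < e"
    proof (intro exI allI impI)
      fix a b assume ab: "N \<le> a" "N \<le> b"
      have "2 / (real a + 1) \<le> 2 / real N" using \<open>N > 0\<close> ab by (intro divide_left_mono) auto
      moreover have "2 / (real b + 1) \<le> 2 / real N" using \<open>N > 0\<close> ab by (intro divide_left_mono) auto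
      moreover have "4 / real N < e\<^sup>2" using N e \<open>N>0\<close>
        by (simp add: field_simps)
      ultimately have "(norm (s a - s b))\<^sup>2 < e\<^sup>2" using key[of a b] by linarith
      thus "norm (s a - s b) < e" using e by (simp add: power_less_imp_less_base)
    qed
  qed
  then obtain m where m: "s \<longlonglongrightarrow> m" using Cauchy_convergent_iff convergent_def by blast
  have mM: "m \<in> M" using cl m s(1) closed_sequential_limits by blast
  have l1: "((\<lambda>n. (norm (z - s n))\<^sup>2) \<longlongrightarrow> (norm (z - m))\<^sup>2) sequentially"
    by (intro tendsto_intros m)
  have l2: "((\<lambda>n. d + 1 / (real n + 1)) \<longlongrightarrow> d) sequentially"
    using LIMSEQ_inverse_real_of_nat_add[of d]
    by (simp add: inverse_eq_divide add.commute)
  have dm: "(norm (z - m))\<^sup>2 \<le> d"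
    by (rule tendsto_le[OF _ l2 l1]) (use s(2) less_imp_le in \<open>auto intro!: always_eventually\<close>)
  show ?thesis
  proof (intro bexI[OF _ mM] ballI)
    fix v assume v: "v \<in> M"
    define a where "a = inner (z - m) v"
    define N where "N = (norm v)\<^sup>2"
    define t where "t = a / (N + 1)"
    have "m + t *\<^sub>R v \<in> M" using sub mM v unfolding subspace_def by auto
    hence "d \<le> (norm (z - m - t *\<^sub>R v))\<^sup>2" using low by (simp add: diff_diff_eq)
    also have "(norm (z - m - t *\<^sub>R v))\<^sup>2 = (norm (z - m))\<^sup>2 - 2 * t * a + t\<^sup>2 * N"
      unfolding a_def N_def power2_norm_eq_inner
      by (simp add: inner_diff_left inner_diff_right inner_commute algebra_simps power2_eq_square)
    finally have "0 \<le> - 2 * t * a + t\<^sup>2 * N" using dm by linarith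
    moreover have "N \<ge> 0" unfolding N_def by simp
    moreover have "- 2 * t * a + t\<^sup>2 * N = a\<^sup>2 * (- 2 * (N + 1) + N) / (N+1)\<^sup>2"
    proof -
      have gen: "- 2 * (a/q) * a + (a/q)\<^sup>2 * (q - 1) = a\<^sup>2 * (- 2 * q + (q - 1)) / q\<^sup>2"
        if "q > 0" for q :: real using that by (simp add: field_simps power2_eq_square)
      from gen[of "N+1"] \<open>N \<ge> 0\<close> show ?thesis unfolding t_def by simp
    qed
    ultimately have "0 \<le> a\<^sup>2 * (- 2 * (N + 1) + N) / (N+1)\<^sup>2" by simp
    hence "0 \<le> a\<^sup>2 * (- 2 * (N + 1) + N)"
      using \<open>N \<ge> 0\<close> by (simp add: zero_le_divide_iff)
    moreover have "- 2 * (N + 1) + N < 0" using \<open>N \<ge> 0\<close> by simp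
    ultimately have "a\<^sup>2 \<le> 0" by (simp add: mult_le_0_iff zero_le_mult_iff)
    thus "inner (z - m) v = 0" unfolding a_def by simp
  qed
qed


lemma riesz_repr:
  fixes L :: "'a::{real_inner,complete_space} \<Rightarrow> real"
  assumes add: "\<And>u v. L (u + v) = L u + L v" and sc: "\<And>c v. L (c *\<^sub>R v) = c * L v"
    and bd: "\<And>v. \<bar>L v\<bar> \<le> K * norm v"
  shows "\<exists>g. \<forall>v. L v = inner g v"
proof (cases "\<forall>v. L v = 0")
  case True thus ?thesis by (intro exI[of _ 0]) simp
next
  case False
  then obtain z where z: "L z \<noteq> 0" by blast
  have bl: "bounded_linear L"
    by (rule bounded_linear_intro[of _ K]) (use add sc bd in \<open>auto simp: mult.commute\<close>)
  have L0: "L 0 = 0" using sc[of 0 0] by simp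
  define N where "N = {v. L v = 0}"
  have subN: "subspace N" unfolding N_def subspace_def using add sc L0 by auto
  have clN: "closed N" unfolding N_def
    by (intro closed_Collect_eq continuous_on_const linear_continuous_on bl)
  obtain m where m: "m \<in> N" "\<And>v. v \<in> N \<Longrightarrow> inner (z - m) v = 0"
    using projection_exists[OF subN clN, of z] by blast
  define z0 where "z0 = z - m"
  have Lz0: "L z0 = L z" unfolding z0_def using add[of "z - m" m] m(1) N_def by simp
  have z0ne: "z0 \<noteq> 0" using Lz0 z L0 by auto
  hence nz: "(norm z0)\<^sup>2 \<noteq> 0" by simp
  show ?thesis
  proof (intro exI[of _ "(L z0 / (norm z0)\<^sup>2) *\<^sub>R z0"] allI)
    fix v
    define w where "w = v - (L v / L z0) *\<^sub>R z0"
    have "L w = L v - (L v / L z0) * L z0"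
      unfolding w_def using add[of w "(L v / L z0) *\<^sub>R z0"] sc w_def by simp
    hence "w \<in> N" unfolding N_def using Lz0 z by simp
    hence "inner z0 w = 0" using m(2) z0_def by simp
    hence "inner z0 v = (L v / L z0) * (norm z0)\<^sup>2"
      unfolding w_def by (simp add: inner_diff_right power2_norm_eq_inner)
    thus "L v = inner ((L z0 / (norm z0)\<^sup>2) *\<^sub>R z0) v"
      using nz Lz0 z by (simp add: field_simps)
  qed
qed


lemma weak_subseq:
  fixes x :: "nat \<Rightarrow> 'a::{real_inner,complete_space}"
  assumes bx: "\<And>n. norm (x n) \<le> B"
  shows "\<exists>r g. strict_mono r \<and> (\<forall>v. (\<lambda>k. inner (x (r k)) v) \<longlonglongrightarrow> inner g v)"
proof -
  have B0: "0 \<le> B" using bx[of 0] norm_ge_zero order.trans by blast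
  have ibd: "\<bar>inner (x n) v\<bar> \<le> B * norm v" for n v
    using Cauchy_Schwarz_ineq2[of "x n" v] bx[of n] by (meson mult_right_mono norm_ge_zero order.trans)
  interpret S: subseqs "\<lambda>m s. convergent (\<lambda>k. inner (x (s k)) (x m))"
  proof
    fix m and s :: "nat \<Rightarrow> nat" assume "strict_mono s"
    have "bounded (range (\<lambda>k. inner (x (s k)) (x m)))"
      unfolding bounded_real using ibd by blast
    from bounded_imp_convergent_subsequence[OF this] obtain l r' where
      "strict_mono r'" "((\<lambda>k. inner (x (s k)) (x m)) \<circ> r') \<longlonglongrightarrow> l" by blast
    thus "\<exists>r'. strict_mono r' \<and> convergent (\<lambda>k. inner (x ((s \<circ> r') k)) (x m))"
      unfolding convergent_def by (auto simp: o_def)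
  qed
  define r where "r = S.diagseq"
  have r: "strict_mono r" unfolding r_def by (rule S.subseq_diagseq)
  define y where "y = (\<lambda>k. x (r k))"
  have conv_x: "convergent (\<lambda>k. inner (y k) (x m))" for m
  proof -
    have "convergent (\<lambda>k. inner (x ((S.diagseq \<circ> (+) (Suc m)) k)) (x m))"
    proof (rule S.diagseq_holds)
      fix r' :: "nat \<Rightarrow> nat" and s n assume "strict_mono r'" "convergent (\<lambda>k. inner (x (s k)) (x n))"
      thus "convergent (\<lambda>k. inner (x ((s \<circ> r') k)) (x n))"
        unfolding convergent_def using LIMSEQ_subseq_LIMSEQ by (fastforce simp: o_def)
    qed
    then obtain l where "(\<lambda>k. inner (y (k + Suc m)) (x m)) \<longlonglongrightarrow> l"
      unfolding convergent_def y_def r_def by (auto simp: o_def add.commute)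
    hence "(\<lambda>k. inner (y k) (x m)) \<longlonglongrightarrow> l" by (rule LIMSEQ_offset)
    thus ?thesis unfolding convergent_def by blast
  qed
  define Sset where "Sset = {v. convergent (\<lambda>k. inner (y k) v)}"
  have subS: "subspace Sset" unfolding subspace_def Sset_def
  proof (intro conjI ballI allI; simp?)
    show "convergent (\<lambda>k. 0::real)" by (rule convergent_const)
  next
    fix u v assume "convergent (\<lambda>k. inner (y k) u)" "convergent (\<lambda>k. inner (y k) v)"
    thus "convergent (\<lambda>k. inner (y k) (u + v))"
      by (simp add: inner_add_right convergent_add)
  next
    fix c :: real and v assume "convergent (\<lambda>k. inner (y k) v)"
    thus "convergent (\<lambda>k. c * inner (y k) v)"
      unfolding convergent_def using tendsto_mult_left by blast
  qed
  have ybd: "\<bar>inner (y k) v\<bar> \<le> B * norm v" for k v unfolding y_def by (rule ibd)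
  have clS: "closed Sset" unfolding closed_sequential_limits
  proof (intro allI impI, elim conjE)
    fix w v assume w: "\<forall>n. w n \<in> Sset" and wl: "w \<longlonglongrightarrow> v"
    have "Cauchy (\<lambda>k. inner (y k) v)"
    proof (rule CauchyI)
      fix e :: real assume e: "0 < e"
      define e' where "e' = e / (3 * (B + 1))"
      have e': "e' > 0" unfolding e'_def using e B0 by simp
      obtain n where n: "norm (w n - v) < e'"
        using wl e' unfolding LIMSEQ_iff by (metis order.refl dist_norm)
      have "Cauchy (\<lambda>k. inner (y k) (w n))" using w Sset_def Cauchy_convergent_iff by blast
      then obtain M where M: "\<forall>a\<ge>M. \<forall>b\<ge>M. norm (inner (y a) (w n) - inner (y b) (w n)) < e/3"
        using e unfolding Cauchy_iff by (meson divide_pos_pos zero_less_numeral)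
      show "\<exists>M. \<forall>a\<ge>M. \<forall>b\<ge>M. norm (inner (y a) v - inner (y b) v) < e"
      proof (intro exI allI impI)
        fix a b assume ab: "M \<le> a" "M \<le> b"
        have Be: "B * e' \<le> e/3" unfolding e'_def using e B0
          by (simp add: field_simps)
        have t1: "\<bar>inner (y a) (v - w n)\<bar> \<le> B * e'"
          using ybd[of a "v - w n"] n B0 by (simp add: norm_minus_commute)
            (meson less_imp_le mult_left_mono order.trans)
        have t2: "\<bar>inner (y b) (w n - v)\<bar> \<le> B * e'"
          using ybd[of b "w n - v"] n B0
          by (meson less_imp_le mult_left_mono order.trans)
        have t3: "\<bar>inner (y a) (w n) - inner (y b) (w n)\<bar> < e/3" using M ab by auto
        have "inner (y a) v - inner (y b) v = inner (y a) (v - w n) + (inner (y a) (w n) - inner (y b) (w n)) + inner (y b) (w n - v)"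
          by (simp add: inner_diff_right)
        hence "\<bar>inner (y a) v - inner (y b) v\<bar> < e" using t1 t2 t3 Be by linarith
        thus "norm (inner (y a) v - inner (y b) v) < e" by simp
      qed
    qed
    thus "v \<in> Sset" unfolding Sset_def using Cauchy_convergent_iff by blast
  qed
  have xS: "x m \<in> Sset" for m unfolding Sset_def using conv_x by blast
  have yS: "y k \<in> Sset" for k unfolding y_def using xS by blast
  have convall: "convergent (\<lambda>k. inner (y k) v)" for v
  proof -
    obtain m where m: "m \<in> Sset" "\<And>u. u \<in> Sset \<Longrightarrow> inner (v - m) u = 0"
      using projection_exists[OF subS clS, of v] by blast
    have "inner (y k) v = inner (y k) m" for k
      using m(2)[OF yS[of k]] by (simp add: inner_diff_left inner_diff_right inner_commute)
    thus ?thesis using m(1) Sset_def by simp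
  qed
  define L where "L = (\<lambda>v. lim (\<lambda>k. inner (y k) v))"
  have Lt: "(\<lambda>k. inner (y k) v) \<longlonglongrightarrow> L v" for v
    unfolding L_def using convall convergent_LIMSEQ_iff by blast
  have Ladd: "L (u + v) = L u + L v" for u v
    using tendsto_add[OF Lt[of u] Lt[of v]] Lt[of "u+v"] LIMSEQ_unique by (simp add: inner_add_right)
  have Lsc: "L (c *\<^sub>R v) = c * L v" for c v
    using tendsto_mult_left[OF Lt[of v], of c] Lt[of "c *\<^sub>R v"] LIMSEQ_unique by simp
  have Lbd: "\<bar>L v\<bar> \<le> B * norm v" for v
    by (rule tendsto_le[OF _ tendsto_const tendsto_rabs[OF Lt[of v]]]) (use ybd in auto)
  obtain g where g: "\<And>v. L v = inner g v" using riesz_repr[OF Ladd Lsc Lbd] by blast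
  show ?thesis using r Lt g unfolding y_def by metis
qed


lemma proj_norm_le:
  fixes f p :: "'a::real_inner"
  shows "norm (f - (inner f p / (norm p)\<^sup>2) *\<^sub>R p) \<le> norm f"
proof (cases "p = 0")
  case True thus ?thesis by simp
next
  case False
  define c where "c = inner f p / (norm p)\<^sup>2"
  have np: "(norm p)\<^sup>2 > 0" using False by simp
  have "(norm (f - c *\<^sub>R p))\<^sup>2 = (norm f)\<^sup>2 - 2 * c * inner f p + c\<^sup>2 * (norm p)\<^sup>2"
    unfolding power2_norm_eq_inner
    by (simp add: inner_diff_left inner_diff_right inner_commute algebra_simps power2_eq_square)
  also have "\<dots> = (norm f)\<^sup>2 - (inner f p)\<^sup>2 / (norm p)\<^sup>2"
    unfolding c_def using np by (simp add: field_simps power2_eq_square)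
  also have "\<dots> \<le> (norm f)\<^sup>2" using np by simp
  finally have "(norm (f - c *\<^sub>R p))\<^sup>2 \<le> (norm f)\<^sup>2" .
  thus ?thesis unfolding c_def using power2_le_imp_le norm_ge_zero by blast
qed

theorem theorem2:
  fixes J :: "'a::{real_inner,complete_space} \<Rightarrow> ereal"
    and f0 :: 'a and f ps :: "nat \<Rightarrow> 'a"
  assumes "proper_fun J" and "convex_fun J" and "lsc_fun J"
    and "abs_one_homogeneous J" and "poincare J"
    and "f0 \<in> orth_compl (null_space J)"
    and "scheme_S J f0 f ps"
  shows "(\<forall>n. norm (f n) \<le> norm f0) \<and>
         (\<exists>r g. strict_mono r \<and> weakly_converges (f \<circ> r) g)"
proof -
  have S: "f 0 = f0" "\<And>n. f n \<noteq> 0 \<Longrightarrow> f (Suc n) = f n - (inner (f n) (ps n) / (norm (ps n))\<^sup>2) *\<^sub>R ps n"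
    "\<And>n. f n = 0 \<Longrightarrow> f (Suc n) = 0"
    using assms(7) unfolding scheme_S_def by auto
  have step: "norm (f (Suc n)) \<le> norm (f n)" for n
    using S(2,3)[of n] proj_norm_le[of "f n" "ps n"] by (cases "f n = 0") auto
  have bd: "\<forall>n. norm (f n) \<le> norm f0"
  proof
    fix n show "norm (f n) \<le> norm f0"
      by (induction n) (use S(1) step order.trans in auto)
  qed
  obtain r g where "strict_mono r" "\<forall>v. (\<lambda>k. inner (f (r k)) v) \<longlonglongrightarrow> inner g v"
    using weak_subseq[of f "norm f0"] bd by blast
  thus ?thesis using bd unfolding weakly_converges_def by (auto simp: o_def)
qed

end
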